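(* As formal power series, $$\sum_{n=1}^{\infty}x^{e(n)}=\frac{1}{1-3x}.$$ Equivalently, for every integer $k\ge 0$, the number of positive integers $i$ with $e(i)=k$ is exactly $3^{k}$.
   Context: The Stern polynomials $B_n(t)\in\mathbb{Z}[t]$, $n\ge 0$, are defined by $B_0(t)=0$, $B_1(t)=1$, $B_{2n}(t)=tB_n(t)$ and $B_{2n+1}(t)=B_n(t)+B_{n+1}(t)$ for $n\ge 1$. For $n\ge 1$, $e(n)=\deg_t B_n(t)$. *)

theory Defs
  imports "HOL-Computational_Algebra.Computational_Algebra"
begin

function stern_poly :: "nat \<Rightarrow> int poly" where
  "stern_poly n =
     (if n = 0 then 0
      else if n = 1 then 1
      else if even n then [:0, 1:] * stern_poly (n div 2)
      else stern_poly (n div 2) + stern_poly (n div 2 + 1))"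
  by auto
termination
  by (relation "measure id") (auto elim!: oddE)

definition stern_deg :: "nat \<Rightarrow> nat" where
  "stern_deg n = degree (stern_poly n)"

end

theory Submission
  imports Defs
begin

declare stern_poly.simps[simp del]
lemma sp0: "stern_poly 0 = 0" by (subst stern_poly.simps) simp
lemma sp1[simp]: "stern_poly 1 = 1" by (subst stern_poly.simps) simp
lemma sp1'[simp]: "stern_poly (Suc 0) = 1" by (subst stern_poly.simps) simp
lemma sp_even: "n \<ge> 1 \<Longrightarrow> stern_poly (2*n) = [:0,1:] * stern_poly n"
  by (subst stern_poly.simps) auto
lemma sp_odd: "n \<ge> 1 \<Longrightarrow> stern_poly (2*n+1) = stern_poly n + stern_poly (n+1)"
  by (subst stern_poly.simps) auto

lemma deg_add_pos:
  fixes p q :: "int poly"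
  assumes "lead_coeff p > 0" "lead_coeff q > 0"
  shows "lead_coeff (p + q) > 0 \<and> degree (p + q) = max (degree p) (degree q)"
proof (cases "degree p = degree q")
  case True
  have c: "coeff (p+q) (degree p) > 0" using assms True by simp
  hence "degree p \<le> degree (p+q)" by (metis le_degree less_irrefl)
  moreover have "degree (p+q) \<le> degree p" using True degree_add_le by (metis max.idem degree_add_le_max)
  ultimately show ?thesis using c True by auto
next
  case False
  show ?thesis
  proof (cases "degree p < degree q")
    case True
    then show ?thesis using assms by (simp add: degree_add_eq_right lead_coeff_add_le coeff_eq_0)
  next
    case False
    then have "degree q < degree p" using \<open>degree p \<noteq> degree q\<close> by simp
    then show ?thesis using assms by (simp add: degree_add_eq_left lead_coeff_add_le coeff_eq_0)
  qed
qed

lemma lead_pos: "n \<ge> 1 \<Longrightarrow> lead_coeff (stern_poly n) > 0"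
proof (induction n rule: less_induct)
  case (less n)
  show ?case
  proof (cases "n = 1")
    case True then show ?thesis by simp
  next
    case False
    define m where "m = n div 2"
    have m: "m \<ge> 1" "n = 2*m \<or> n = 2*m+1" using less.prems False unfolding m_def by auto
    show ?thesis using m(2)
    proof
      assume "n = 2*m"
      have "lead_coeff (stern_poly m) > 0" using less.IH[of m] m \<open>n = 2*m\<close> by simp
      then have "stern_poly m \<noteq> 0" by force
      then show ?thesis using less.IH[of m] m sp_even \<open>n = 2*m\<close> by (simp add: lead_coeff_mult)
    next
      assume "n = 2*m+1"
      have a: "lead_coeff (stern_poly m) > 0" "lead_coeff (stern_poly (m+1)) > 0"
        using less.IH[of m] less.IH[of "m+1"] m \<open>n = 2*m+1\<close> by auto
      show ?thesis unfolding \<open>n = 2*m+1\<close> sp_odd[OF m(1)]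
        using deg_add_pos[OF a] by blast
    qed
  qed
qed

lemma e_even: "n \<ge> 1 \<Longrightarrow> stern_deg (2*n) = stern_deg n + 1"
proof -
  assume "n \<ge> 1"
  then have "stern_poly n \<noteq> 0" using lead_pos by fastforce
  then show ?thesis using \<open>n \<ge> 1\<close> by (simp add: stern_deg_def sp_even degree_mult_eq)
qed

lemma e_odd: assumes "n \<ge> 1" shows "stern_deg (2*n+1) = max (stern_deg n) (stern_deg (n+1))"
proof -
  have h: "degree (stern_poly n + stern_poly (n+1)) = max (degree (stern_poly n)) (degree (stern_poly (n+1)))"
    using deg_add_pos[OF lead_pos[of n] lead_pos[of "n+1"]] assms by simp
  show ?thesis unfolding stern_deg_def sp_odd[OF assms] by (rule h)
qed

lemma e1: "stern_deg 1 = 0" by (simp add: stern_deg_def)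

lemma e2: "stern_deg 2 = 1" "stern_deg (Suc (Suc 0)) = 1"
  using e_even[of 1] e1 by (simp_all add: numeral_2_eq_2)

lemma adj: "n \<ge> 1 \<Longrightarrow> stern_deg (n+1) \<le> stern_deg n + 1 \<and> stern_deg n \<le> stern_deg (n+1) + 1"
proof (induction n rule: less_induct)
  case (less n)
  show ?case
  proof (cases "n = 1")
    case True then show ?thesis using e2 e1 by simp
  next
    case False
    define m where "m = n div 2"
    have m: "m \<ge> 1" "n = 2*m \<or> n = 2*m+1" using less.prems False unfolding m_def by auto
    show ?thesis using m(2)
    proof
      assume n: "n = 2*m"
      have "stern_deg (m+1) \<le> stern_deg m + 1" using less.IH[of m] m n by auto
      then show ?thesis using n e_even[of m] e_odd[of m] m by simp
    next
      assume n: "n = 2*m+1"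
      have "stern_deg m \<le> stern_deg (m+1) + 1" using less.IH[of m] m n by auto
      moreover have "2*m+1+1 = 2*(m+1)" by simp
      ultimately show ?thesis using n e_even[of "m+1"] e_odd[of m] m by simp
    qed
  qed
qed

lemma e_4n1: "n \<ge> 1 \<Longrightarrow> stern_deg (4*n+1) = stern_deg n + 1"
proof -
  assume n: "n \<ge> 1"
  have "4*n+1 = 2*(2*n)+1" "2*n+1 = 2*n+1" by simp_all
  then have "stern_deg (4*n+1) = max (stern_deg (2*n)) (stern_deg (2*n+1))"
    using e_odd[of "2*n"] n by simp
  then show ?thesis using e_even[of n] e_odd[of n] adj[of n] n by simp
qed

lemma e_4n3: "stern_deg (4*n+3) = stern_deg (n+1) + 1"
proof (cases "n = 0")
  case True
  then show ?thesis using e_odd[of 1] e2 e1 by simp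
next
  case False
  then have n: "n \<ge> 1" by simp
  have eq: "4*n+3 = 2*(2*n+1)+1" "2*n+1+1 = 2*(n+1)" by simp_all
  have "stern_deg (4*n+3) = max (stern_deg (2*n+1)) (stern_deg (2*n+1+1))"
    unfolding eq(1) by (rule e_odd) simp
  then have "stern_deg (4*n+3) = max (stern_deg (2*n+1)) (stern_deg (2*(n+1)))"
    unfolding eq(2) .
  then show ?thesis using e_even[of "n+1"] e_odd[of n] adj[of n] n by simp
qed

definition S :: "nat \<Rightarrow> nat set" where "S k = {i. 1 \<le> i \<and> stern_deg i = k}"


lemma decomp:
  assumes i: "i \<ge> 2"
  shows "\<exists>m\<ge>1. (i = 2*m \<or> i = 4*m+1 \<or> i = 4*m-1) \<and> stern_deg i = stern_deg m + 1"
proof -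
  have "even i \<or> i mod 4 = 1 \<or> i mod 4 = 3" unfolding even_iff_mod_2_eq_zero by presburger
  then consider "even i" | "i mod 4 = 1" | "i mod 4 = 3" by blast
  then show ?thesis
  proof cases
    case 1
    then obtain m where m: "i = 2*m" by blast
    then have "m \<ge> 1" using i by simp
    then show ?thesis using m e_even[of m] by blast
  next
    case 2
    define m where "m = i div 4"
    have im: "i = 4*m+1" using 2 unfolding m_def by presburger
    then have "m \<ge> 1" using i by simp
    then show ?thesis using im e_4n1[of m] by blast
  next
    case 3
    define m where "m = i div 4"
    have im: "i = 4*(m+1)-1" "i = 4*m+3" using 3 unfolding m_def by presburger+
    have "stern_deg i = stern_deg (m+1) + 1" using e_4n3[of m] im(2) by simp
    moreover have "(1::nat) \<le> m+1" by simp
    ultimately show ?thesis using im(1) by blast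
  qed
qed

lemma S0: "S 0 = {1}"
proof -
  have "i \<notin> S 0" if "i \<ge> 2" for i using decomp[OF that] unfolding S_def by auto
  moreover have "i \<in> S 0 \<Longrightarrow> i \<ge> 1" for i unfolding S_def by simp
  moreover have "1 \<in> S 0" unfolding S_def using e1 by simp
  ultimately have "i \<in> S 0 \<longleftrightarrow> i = 1" for i
  proof (cases "i \<ge> 2")
    case False
    then show ?thesis using \<open>\<And>i. i \<in> S 0 \<Longrightarrow> i \<ge> 1\<close>[of i] \<open>1 \<in> S 0\<close> by (cases "i \<in> S 0") auto
  qed (use \<open>\<And>i. i \<ge> 2 \<Longrightarrow> i \<notin> S 0\<close> in auto)
  then show ?thesis by blast
qed

lemma SSuc: "S (Suc k) = (\<lambda>s. 2*s) ` S k \<union> (\<lambda>s. 4*s+1) ` S k \<union> (\<lambda>s. 4*s-1) ` S k"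
proof
  show "S (Suc k) \<subseteq> (\<lambda>s. 2*s) ` S k \<union> (\<lambda>s. 4*s+1) ` S k \<union> (\<lambda>s. 4*s-1) ` S k"
  proof
    fix i assume "i \<in> S (Suc k)"
    then have i: "i \<ge> 1" "stern_deg i = Suc k" unfolding S_def by auto
    then have "i \<noteq> 1" using e1 by auto
    then have "i \<ge> 2" using i by simp
    then obtain m where m: "m \<ge> 1" "i = 2*m \<or> i = 4*m+1 \<or> i = 4*m-1" "stern_deg i = stern_deg m + 1"
      using decomp by blast
    then have "m \<in> S k" using i unfolding S_def by simp
    then show "i \<in> (\<lambda>s. 2*s) ` S k \<union> (\<lambda>s. 4*s+1) ` S k \<union> (\<lambda>s. 4*s-1) ` S k"
      using m(2) by blast
  qed
next
  show "(\<lambda>s. 2*s) ` S k \<union> (\<lambda>s. 4*s+1) ` S k \<union> (\<lambda>s. 4*s-1) ` S k \<subseteq> S (Suc k)"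
  proof (intro Un_least image_subsetI)
    fix s assume s: "s \<in> S k"
    then have s1: "s \<ge> 1" "stern_deg s = k" unfolding S_def by auto
    show "2*s \<in> S (Suc k)" using e_even[of s] s1 unfolding S_def by simp
    show "4*s+1 \<in> S (Suc k)" using e_4n1[of s] s1 unfolding S_def by simp
    have "4*s-1 = 4*(s-1)+3" "s - 1 + 1 = s" using s1 by simp_all
    then show "4*s-1 \<in> S (Suc k)" using e_4n3[of "s-1"] s1 unfolding S_def by simp
  qed
qed

lemma S_card: "finite (S k) \<and> card (S k) = 3^k \<and> (\<forall>s\<in>S k. s \<ge> 1)"
proof (induction k)
  case 0
  then show ?case using S0 by simp
next
  case (Suc k)
  have fin: "finite (S k)" and c: "card (S k) = 3^k" and pos: "\<forall>s\<in>S k. s \<ge> 1" using Suc by auto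
  let ?A = "(\<lambda>s. 2*s) ` S k" and ?B = "(\<lambda>s. 4*s+1) ` S k" and ?C = "(\<lambda>s. 4*s-1) ` S k"
  have cA: "card ?A = 3^k" using c by (simp add: card_image inj_on_def)
  have cB: "card ?B = 3^k" using c by (simp add: card_image inj_on_def)
  have cC: "card ?C = 3^k" using c pos by (subst card_image) (auto simp: inj_on_def)
  have d1: "?A \<inter> ?B = {}" by auto presburger
  have x1: "\<And>x y::nat. x \<ge> 1 \<Longrightarrow> 4*x-1 \<noteq> 2*y" by presburger
  have x2: "\<And>x y::nat. x \<ge> 1 \<Longrightarrow> 4*x-1 \<noteq> 4*y+1" by presburger
  have d2: "(?A \<union> ?B) \<inter> ?C = {}" using pos x1 x2 by fastforce
  have "card (?A \<union> ?B \<union> ?C) = 3^k + 3^k + 3^k"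
    using fin d1 d2 cA cB cC by (simp add: card_Un_disjoint)
  then show ?case using fin SSuc[of k] pos unfolding S_def by auto
qed

theorem theorem4p1:
  shows "(\<forall>k. finite {i::nat. 1 \<le> i \<and> stern_deg i = k}) \<and>
         Abs_fps (\<lambda>k. of_nat (card {i::nat. 1 \<le> i \<and> stern_deg i = k}) :: rat)
           = inverse (1 - 3 * fps_X) \<and>
         (\<forall>k. card {i::nat. 1 \<le> i \<and> stern_deg i = k} = 3 ^ k)"
proof -
  have c: "\<And>k. card {i::nat. 1 \<le> i \<and> stern_deg i = k} = 3^k"
    using S_card unfolding S_def by blast
  have f: "\<And>k. finite {i::nat. 1 \<le> i \<and> stern_deg i = k}"
    using S_card unfolding S_def by blast
  let ?A = "Abs_fps (\<lambda>k. (3::rat)^k)"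
  have "(1 - 3 * fps_X) * ?A = 1"
  proof (rule fps_ext)
    fix n
    show "((1 - 3 * fps_X) * ?A) $ n = (1::rat fps) $ n"
      by (cases n) (simp_all add: algebra_simps fps_X_mult_nth fps_numeral_fps_const)
  qed
  then have "inverse (1 - 3 * fps_X) = ?A" by (rule fps_inverse_unique)
  then show ?thesis using c f by simp
qed

end
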